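(* Let $\mathcal{S}$ be a set, $\mathcal{A}$ a finite set and $\boldsymbol\varphi:\mathcal{S}\times\mathcal{A}\to\mathbb{R}^d$ with $\|\boldsymbol\varphi(s,a)\|_2\le1$ for all $(s,a)$. Fix constants $L,B,D,M>0$ and $\lambda>0$. Let $\mathcal{Q}$ be the class of functions $\mathcal{S}\times\mathcal{A}\to\mathbb{R}$ of the form $$Q(\cdot,\cdot)=\Big(\mathbf w^\top\boldsymbol\varphi(\cdot,\cdot)+v+\beta\sqrt{\boldsymbol\varphi(\cdot,\cdot)^\top\Lambda^{-1}\boldsymbol\varphi(\cdot,\cdot)}\Big)\wedge M$$ with $\|\mathbf w\|_2\le L$, $\beta\in[0,B]$, $v\in[0,D]$, and $\Lambda$ a positive definite matrix with $\lambda_{\min}(\Lambda)\ge\lambda$. Let $$\mathcal{V}=\Big\{\max_aQ(\cdot,a):\ Q(\cdot,\cdot)=\textsc{Clip}\big(Q_1(\cdot,\cdot);\,Q_2(\cdot,\cdot)\vee Q_3(\cdot,\cdot),\,Q_4(\cdot,\cdot)\wedge Q_5(\cdot,\cdot)\big),\ Q_1,\dots,Q_5\in\mathcal{Q}\Big\}.$$ Then for every $\varepsilon>0$, $$\log\mathcal{N}_\varepsilon(\mathcal{V},\|\cdot\|_\infty)\le5d\log(1+8L/\varepsilon)+5\log(1+8D/\varepsilon)+5d^2\log\big[1+8d^{1/2}B^2/(\lambda\varepsilon^2)\big].$$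
   Context: $a\vee b=\max\{a,b\}$, $a\wedge b=\min\{a,b\}$ (applied pointwise to functions), $\textsc{Clip}(x;L,U)=(x\vee L)\wedge U$. $\mathcal{N}_\varepsilon(\mathcal{F},\|\cdot\|_\infty)$ denotes the $\varepsilon$-covering number of the function class $\mathcal{F}$ with respect to the distance $\sup_x|f(x)-g(x)|$. *)

theory Defs
  imports "HOL-Analysis.Analysis"
begin

definition clip :: "real \<Rightarrow> real \<Rightarrow> real \<Rightarrow> real" where
  "clip x lo up = min (max x lo) up"

text \<open>epsilon-covering number w.r.t. the sup distance; infinity if no finite cover exists.
  Centres are arbitrary real-valued functions on the domain.\<close>
definition covering_number :: "real \<Rightarrow> ('s \<Rightarrow> real) set \<Rightarrow> enat" where
  "covering_number eps F =
     Inf {enat (card C) | C. finite C \<and>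
            (\<forall>f\<in>F. \<exists>g\<in>C. (SUP x. \<bar>f x - g x\<bar>) \<le> eps \<and> bdd_above (range (\<lambda>x. \<bar>f x - g x\<bar>)))}"

definition pos_def_mat :: "real^'d^'d \<Rightarrow> bool" where
  "pos_def_mat Lam \<longleftrightarrow> transpose Lam = Lam \<and> (\<forall>x. x \<noteq> 0 \<longrightarrow> x \<bullet> (Lam *v x) > 0)"

definition min_eig_ge :: "real^'d^'d \<Rightarrow> real \<Rightarrow> bool" where
  "min_eig_ge Lam lam \<longleftrightarrow> (\<forall>\<mu> v. v \<noteq> 0 \<and> Lam *v v = \<mu> *\<^sub>R v \<longrightarrow> lam \<le> \<mu>)"

definition Qclass :: "('s \<Rightarrow> 'b \<Rightarrow> real^'d) \<Rightarrow> real \<Rightarrow> real \<Rightarrow> real \<Rightarrow> real \<Rightarrow> real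
                       \<Rightarrow> ('s \<Rightarrow> 'b \<Rightarrow> real) set" where
  "Qclass \<phi> L B D M lam =
     {(\<lambda>s a. min (w \<bullet> \<phi> s a + v + \<beta> * sqrt (\<phi> s a \<bullet> (matrix_inv Lam *v \<phi> s a))) M)
      | w v \<beta> Lam. norm w \<le> L \<and> 0 \<le> \<beta> \<and> \<beta> \<le> B \<and> 0 \<le> v \<and> v \<le> D \<and>
                   pos_def_mat Lam \<and> min_eig_ge Lam lam}"

definition Vclass :: "'b set \<Rightarrow> ('s \<Rightarrow> 'b \<Rightarrow> real^'d) \<Rightarrow> real \<Rightarrow> real \<Rightarrow> real \<Rightarrow> real \<Rightarrow> real
                       \<Rightarrow> ('s \<Rightarrow> real) set" where
  "Vclass A \<phi> L B D M lam =
     {(\<lambda>s. Max ((\<lambda>a. clip (Q1 s a) (max (Q2 s a) (Q3 s a)) (min (Q4 s a) (Q5 s a))) ` A))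
      | Q1 Q2 Q3 Q4 Q5. Q1 \<in> Qclass \<phi> L B D M lam \<and> Q2 \<in> Qclass \<phi> L B D M lam \<and>
          Q3 \<in> Qclass \<phi> L B D M lam \<and> Q4 \<in> Qclass \<phi> L B D M lam \<and> Q5 \<in> Qclass \<phi> L B D M lam}"

end

theory Submission
  imports Defs
begin

lemma rayleigh:
  fixes Lam :: "real^'d^'d"
  assumes pd: "pos_def_mat Lam" and me: "min_eig_ge Lam lam"
  shows "lam * (norm x)^2 \<le> x \<bullet> (Lam *v x)"
proof -
  define q where "q = (\<lambda>x::real^'d. x \<bullet> (Lam *v x))"
  have sym: "transpose Lam = Lam" using pd by (simp add: pos_def_mat_def)
  have symq: "u \<bullet> (Lam *v v) = v \<bullet> (Lam *v u)" for u v :: "real^'d"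
    by (metis dot_lmul_matrix inner_commute sym vector_transpose_matrix)
  have cont: "continuous_on (sphere 0 1) q"
    unfolding q_def by (intro continuous_intros linear_continuous_on matrix_vector_mul_linear bounded_linear_inner_right)
  have ne: "sphere (0::real^'d) 1 \<noteq> {}" by simp
  obtain x0 where x0: "x0 \<in> sphere 0 1" and mn: "\<And>y. y \<in> sphere 0 1 \<Longrightarrow> q x0 \<le> q y"
    using continuous_attains_inf[OF compact_sphere ne cont] by blast
  define mu where "mu = q x0"
  have n1: "norm x0 = 1" using x0 by simp
  have qhom: "q (c *\<^sub>R y) = c^2 * q y" for c y
    by (simp add: q_def matrix_vector_mult_scaleR power2_eq_square)
  have all: "mu * (norm y)^2 \<le> q y" for y
  proof (cases "y = 0")
    case True then show ?thesis by (simp add: q_def)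
  next
    case False
    have "q (y /\<^sub>R norm y) \<ge> mu" unfolding mu_def using False by (intro mn) simp
    moreover have "q y = (norm y)^2 * q (y /\<^sub>R norm y)"
      using False by (simp add: qhom power2_eq_square field_simps)
    ultimately show ?thesis by (metis mult.commute mult_left_mono zero_le_power2)
  qed
  have c0: "y \<bullet> (Lam *v x0 - mu *\<^sub>R x0) = 0" for y
  proof (rule ccontr)
    assume cne: "y \<bullet> (Lam *v x0 - mu *\<^sub>R x0) \<noteq> 0"
    define c where "c = y \<bullet> (Lam *v x0 - mu *\<^sub>R x0)"
    define k where "k = q y - mu * (norm y)^2"
    have k0: "k \<ge> 0" using all[of y] by (simp add: k_def)
    have key: "2 * t * c + t^2 * k \<ge> 0" for t
    proof -
      have "mu * (norm (x0 + t *\<^sub>R y))^2 \<le> q (x0 + t *\<^sub>R y)" by (rule all)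
      moreover have "(norm (x0 + t *\<^sub>R y))^2 = 1 + 2 * t * (x0 \<bullet> y) + t^2 * (norm y)^2"
      proof -
        have "(norm (x0 + t *\<^sub>R y))^2 = (x0 + t *\<^sub>R y) \<bullet> (x0 + t *\<^sub>R y)" by (simp add: power2_norm_eq_inner)
        also have "\<dots> = x0 \<bullet> x0 + 2 * t * (x0 \<bullet> y) + t^2 * (y \<bullet> y)"
          by (simp add: inner_add_left inner_add_right inner_commute power2_eq_square algebra_simps)
        finally show ?thesis using n1 by (simp add: power2_norm_eq_inner[symmetric])
      qed
      moreover have "q (x0 + t *\<^sub>R y) = mu + 2 * t * (y \<bullet> (Lam *v x0)) + t^2 * q y"
        using symq[of x0 y] by (simp add: q_def mu_def matrix_vector_right_distrib matrix_vector_mult_scaleR inner_add_left inner_add_right power2_eq_square algebra_simps)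
      ultimately show ?thesis
        by (simp add: c_def k_def inner_diff_right algebra_simps inner_commute)
    qed
    define t where "t = - c / (k + 1)"
    have k1: "k + 1 > 0" using k0 by linarith
    have tk: "t * k = - c - t" unfolding t_def using k1 by (simp add: field_simps)
    have "t^2 * k = t * (t * k)" by (simp add: power2_eq_square)
    also have "\<dots> = t * (- c - t)" by (simp only: tk)
    finally have e1: "2 * t * c + t^2 * k = t * c - t^2" by (simp add: algebra_simps power2_eq_square)
    have "t * c = - (c^2) / (k+1)" by (simp add: t_def power2_eq_square)
    moreover have "c^2 > 0" using cne unfolding c_def[symmetric] by simp
    ultimately have "t * c < 0" using k1 by simp
    hence "2 * t * c + t^2 * k < 0" using e1 zero_le_power2[of t] by linarith
    thus False using key[of t] by simp
  qed
  have "Lam *v x0 = mu *\<^sub>R x0"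
    using c0[of "Lam *v x0 - mu *\<^sub>R x0"] by simp
  moreover have "x0 \<noteq> 0" using n1 by auto
  ultimately have "lam \<le> mu" using me unfolding min_eig_ge_def by blast
  thus ?thesis using all[of x] unfolding q_def
    by (meson order_trans mult_right_mono zero_le_power2)
qed

lemma inv_props:
  fixes Lam :: "real^'d^'d"
  assumes pd: "pos_def_mat Lam" and me: "min_eig_ge Lam lam" and lp: "lam > 0"
  shows "Lam *v (matrix_inv Lam *v y) = y"
    and "norm (matrix_inv Lam *v y) \<le> norm y / lam"
    and "0 \<le> y \<bullet> (matrix_inv Lam *v y)"
    and "norm (matrix_inv Lam) \<le> sqrt (real CARD('d)) / lam"
proof -
  have ker: "\<forall>x. Lam *v x = 0 \<longrightarrow> x = 0"
    using pd unfolding pos_def_mat_def by (metis inner_zero_right less_irrefl)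
  hence "invertible Lam" using matrix_left_invertible_ker invertible_left_inverse by blast
  hence "Lam ** matrix_inv Lam = mat 1 \<and> matrix_inv Lam ** Lam = mat 1"
    unfolding invertible_def matrix_inv_def by (rule someI_ex)
  hence LI: "Lam ** matrix_inv Lam = mat 1" by blast
  have a: "Lam *v (matrix_inv Lam *v z) = z" for z
    by (simp add: matrix_vector_mul_assoc LI)
  thus "Lam *v (matrix_inv Lam *v y) = y" .
  have b: "norm (matrix_inv Lam *v z) \<le> norm z / lam" for z
  proof -
    define x where "x = matrix_inv Lam *v z"
    have "lam * (norm x)^2 \<le> x \<bullet> (Lam *v x)" by (rule rayleigh[OF pd me])
    also have "\<dots> = x \<bullet> z" using a by (simp add: x_def)
    also have "\<dots> \<le> norm x * norm z" by (metis Cauchy_Schwarz_ineq2 abs_ge_self order_trans)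
    finally have h: "lam * (norm x)^2 \<le> norm x * norm z" .
    show ?thesis
    proof (cases "norm x = 0")
      case True thus ?thesis using lp by (simp add: x_def)
    next
      case False
      hence "lam * norm x \<le> norm z" using h by (simp add: power2_eq_square)
      thus ?thesis using lp by (simp add: x_def field_simps mult.commute)
    qed
  qed
  thus "norm (matrix_inv Lam *v y) \<le> norm y / lam" .
  show "0 \<le> y \<bullet> (matrix_inv Lam *v y)"
  proof -
    define x where "x = matrix_inv Lam *v y"
    have "0 \<le> lam * (norm x)^2" using lp by simp
    also have "\<dots> \<le> x \<bullet> (Lam *v x)" by (rule rayleigh[OF pd me])
    also have "\<dots> = y \<bullet> x" using a by (simp add: x_def inner_commute)
    finally show ?thesis by (simp add: x_def)
  qed
  have row: "norm (matrix_inv Lam $ i) \<le> 1 / lam" for i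
  proof -
    define r where "r = matrix_inv Lam $ i"
    have "(norm r)^2 = (matrix_inv Lam *v r) $ i"
      by (simp add: r_def matrix_vector_mult_def inner_vec_def power2_norm_eq_inner)
    also have "\<dots> \<le> norm (matrix_inv Lam *v r)"
      by (meson abs_ge_self component_le_norm_cart order_trans)
    also have "\<dots> \<le> norm r / lam" by (rule b)
    finally have h: "(norm r)^2 \<le> norm r / lam" .
    show ?thesis
    proof (cases "norm r = 0")
      case True thus ?thesis using lp by (simp add: r_def)
    next
      case False
      have "norm r * norm r \<le> norm r * (1 / lam)" using h by (simp add: power2_eq_square)
      moreover have "norm r > 0" using False by simp
      ultimately have "norm r \<le> 1 / lam" by (metis mult_le_cancel_left_pos)
      thus ?thesis by (simp add: r_def)
    qed
  qed
  have "norm (matrix_inv Lam) = sqrt (\<Sum>i\<in>UNIV. (norm (matrix_inv Lam $ i))^2)"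
    by (simp add: norm_vec_def L2_set_def)
  also have "\<dots> \<le> sqrt (\<Sum>i\<in>(UNIV::'d set). (1/lam)^2)"
    using row by (intro real_sqrt_le_mono sum_mono power_mono) auto
  also have "\<dots> = sqrt (real CARD('d)) / lam"
    using lp by (simp add: real_sqrt_mult power_divide real_sqrt_divide)
  finally show "norm (matrix_inv Lam) \<le> sqrt (real CARD('d)) / lam" .
qed



lemma sep_card_bound:
  fixes S :: "'a::euclidean_space set"
  assumes fin: "finite S" and sub: "S \<subseteq> cball 0 R" and R: "R \<ge> 0" and dp: "\<delta> > 0"
    and sep: "\<And>x y. x \<in> S \<Longrightarrow> y \<in> S \<Longrightarrow> x \<noteq> y \<Longrightarrow> \<delta> < dist x y"
  shows "real (card S) \<le> (1 + 2 * R / \<delta>) ^ DIM('a)"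
proof -
  define r where "r = \<delta> / 2"
  have r0: "r > 0" using dp by (simp add: r_def)
  define U where "U = unit_ball_vol (real DIM('a))"
  have U0: "U > 0" by (simp add: U_def)
  have disj: "disjoint_family_on (\<lambda>x. ball x r) S"
    unfolding disjoint_family_on_def
  proof (intro ballI impI)
    fix x y assume xy: "x \<in> S" "y \<in> S" "x \<noteq> y"
    show "ball x r \<inter> ball y r = {}"
    proof (rule ccontr)
      assume "ball x r \<inter> ball y r \<noteq> {}"
      then obtain z where "dist x z < r" "dist y z < r" by auto
      hence "dist x y < \<delta>" unfolding r_def using dist_triangle3[of x y z] dist_commute[of z x] dist_commute[of z y] by linarith
      thus False using sep[OF xy] by simp
    qed
  qed
  have "measure lborel (\<Union>x\<in>S. ball x r) = (\<Sum>x\<in>S. measure lborel (ball x r))"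
    using fin disj emeasure_lborel_ball_finite
    by (intro measure_finite_Union) (auto simp: less_top[symmetric])
  also have "\<dots> = real (card S) * (U * r ^ DIM('a))"
    using r0 by (simp add: content_ball U_def)
  finally have e1: "measure lborel (\<Union>x\<in>S. ball x r) = real (card S) * (U * r ^ DIM('a))" .
  have "(\<Union>x\<in>S. ball x r) \<subseteq> ball 0 (R + r)"
  proof
    fix z assume "z \<in> (\<Union>x\<in>S. ball x r)"
    then obtain x where "x \<in> S" "dist x z < r" by auto
    moreover hence "norm x \<le> R" using sub by auto
    moreover have "norm z \<le> norm x + norm (x - z)" using norm_triangle_ineq4[of x "x - z"] by simp
    ultimately show "z \<in> ball 0 (R + r)" by (simp add: dist_norm)
  qed
  moreover have "ball 0 (R + r) \<in> fmeasurable lborel"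
    using emeasure_lborel_ball_finite by (intro fmeasurableI) auto
  moreover have "(\<Union>x\<in>S. ball x r) \<in> sets lborel" by (auto intro!: borel_open)
  ultimately have "measure lborel (\<Union>x\<in>S. ball x r) \<le> measure lborel (ball (0::'a) (R + r))"
    by (intro measure_mono_fmeasurable) auto
  also have "\<dots> = U * (R + r) ^ DIM('a)"
    using r0 R by (simp add: content_ball U_def)
  finally have "real (card S) * (U * r ^ DIM('a)) \<le> U * (R + r) ^ DIM('a)" using e1 by simp
  hence "real (card S) * r ^ DIM('a) \<le> (R + r) ^ DIM('a)" using U0
    by (simp add: mult.left_commute)
  hence "real (card S) \<le> (R + r) ^ DIM('a) / r ^ DIM('a)" using r0
    by (simp add: field_simps)
  also have "\<dots> = ((R + r) / r) ^ DIM('a)" by (simp add: power_divide)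
  also have "(R + r) / r = 1 + 2 * R / \<delta>" using r0 unfolding r_def by (simp add: field_simps)
  finally show ?thesis .
qed

lemma net_exists:
  fixes R \<delta> :: real
  assumes R: "R \<ge> 0" and dp: "\<delta> > 0"
  shows "\<exists>C::'a::euclidean_space set. finite C \<and> real (card C) \<le> (1 + 2 * R / \<delta>) ^ DIM('a) \<and>
           (\<forall>x\<in>cball 0 R. \<exists>c\<in>C. dist x c \<le> \<delta>)"
proof -
  define P where "P = (\<lambda>S::'a set. finite S \<and> S \<subseteq> cball 0 R \<and>
       (\<forall>x\<in>S. \<forall>y\<in>S. x \<noteq> y \<longrightarrow> \<delta> < dist x y))"
  define N where "N = nat \<lceil>(1 + 2 * R / \<delta>) ^ DIM('a)\<rceil>"
  have bnd: "P S \<Longrightarrow> card S \<le> N" for S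
  proof -
    assume "P S"
    hence "real (card S) \<le> (1 + 2 * R / \<delta>) ^ DIM('a)"
      unfolding P_def using sep_card_bound[of S R \<delta>] R dp by blast
    thus "card S \<le> N" unfolding N_def by linarith
  qed
  have "P {}" by (simp add: P_def)
  have "\<forall>y. P y \<longrightarrow> card y < Suc N" using bnd by (simp add: less_Suc_eq_le)
  hence "\<exists>S. P S \<and> (\<forall>T. P T \<longrightarrow> card T \<le> card S)"
    using Lattices_Big.ex_has_greatest_nat[where P=P and k="{}" and f=card and b="Suc N"] \<open>P {}\<close> by blast
  then obtain S where PS: "P S" and mx: "\<And>T. P T \<Longrightarrow> card T \<le> card S" by blast
  have cov: "\<forall>x\<in>cball 0 R. \<exists>c\<in>S. dist x c \<le> \<delta>"
  proof (rule ccontr)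
    assume "\<not> ?thesis"
    then obtain x where x: "x \<in> cball 0 R" "\<forall>c\<in>S. \<delta> < dist x c" by force
    hence xn: "x \<notin> S" using dp by force
    have "P (insert x S)" unfolding P_def
    proof (intro conjI ballI impI)
      show "finite (insert x S)" using PS by (simp add: P_def)
      show "insert x S \<subseteq> cball 0 R" using PS x(1) by (simp add: P_def)
      fix y z assume yz: "y \<in> insert x S" "z \<in> insert x S" "y \<noteq> z"
      show "\<delta> < dist y z"
      proof (cases "y = x")
        case True thus ?thesis using yz x(2) by auto
      next
        case False
        show ?thesis
        proof (cases "z = x")
          case True thus ?thesis using yz x(2) False by (auto simp: dist_commute)
        next
          case False2: False
          thus ?thesis using yz False PS unfolding P_def by auto
        qed
      qed
    qed
    hence "card (insert x S) \<le> card S" by (rule mx)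
    thus False using xn PS by (simp add: P_def)
  qed
  have "finite S" "S \<subseteq> cball 0 R" "\<forall>x\<in>S. \<forall>y\<in>S. x \<noteq> y \<longrightarrow> \<delta> < dist x y"
    using PS unfolding P_def by auto
  hence "real (card S) \<le> (1 + 2 * R / \<delta>) ^ DIM('a)"
    using sep_card_bound[of S R \<delta>] R dp by blast
  thus ?thesis using cov \<open>finite S\<close> by blast
qed



lemma sqrt_hoelder:
  fixes a b :: real
  assumes a: "a \<ge> 0"
  shows "\<bar>sqrt a - sqrt (max 0 b)\<bar> \<le> sqrt \<bar>a - b\<bar>"
proof -
  define c where "c = max 0 b"
  have c0: "c \<ge> 0" by (simp add: c_def)
  have cab: "\<bar>a - c\<bar> \<le> \<bar>a - b\<bar>" using a by (simp add: c_def)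
  have gen: "sqrt x - sqrt y \<le> sqrt (x - y)" if "0 \<le> y" "y \<le> x" for x y :: real
  proof -
    have "(sqrt x - sqrt y)^2 \<le> (sqrt x - sqrt y) * (sqrt x + sqrt y)"
      using that by (simp add: power2_eq_square mult_left_mono real_sqrt_le_mono)
    also have "\<dots> = x - y" using that by (simp add: algebra_simps)
    finally have "(sqrt x - sqrt y)^2 \<le> x - y" .
    hence "sqrt ((sqrt x - sqrt y)^2) \<le> sqrt (x - y)" by (rule real_sqrt_le_mono)
    thus ?thesis using that by (simp add: real_sqrt_le_mono)
  qed
  have "\<bar>sqrt a - sqrt c\<bar> \<le> sqrt \<bar>a - c\<bar>"
  proof (cases "c \<le> a")
    case True thus ?thesis using gen[of c a] c0 real_sqrt_le_mono[of c a] by simp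
  next
    case False thus ?thesis using gen[of a c] a real_sqrt_le_mono[of a c] by simp
  qed
  also have "\<dots> \<le> sqrt \<bar>a - b\<bar>" using cab by (rule real_sqrt_le_mono)
  finally show ?thesis by (simp add: c_def)
qed

lemma norm_mat_vec:
  fixes M :: "real^'n^'m"
  shows "norm (M *v x) \<le> norm M * norm x"
proof -
  have comp: "\<bar>(M *v x) $ i\<bar> \<le> norm (M $ i) * norm x" for i
  proof -
    have "(M *v x) $ i = M $ i \<bullet> x" by (simp add: matrix_vector_mult_def inner_vec_def)
    thus ?thesis by (simp add: Cauchy_Schwarz_ineq2)
  qed
  have "norm (M *v x) = sqrt (\<Sum>i\<in>UNIV. ((M *v x) $ i)^2)"
    by (simp add: norm_vec_def L2_set_def)
  also have "\<dots> \<le> sqrt (\<Sum>i\<in>UNIV. (norm (M $ i) * norm x)^2)"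
    using comp by (intro real_sqrt_le_mono sum_mono) (metis abs_ge_zero power2_abs power_mono)
  also have "\<dots> = sqrt ((\<Sum>i\<in>UNIV. (norm (M $ i))^2) * (norm x)^2)"
    by (simp add: power_mult_distrib sum_distrib_right)
  also have "\<dots> = norm M * norm x"
    by (simp add: real_sqrt_mult norm_vec_def[of M] L2_set_def)
  finally show ?thesis .
qed

lemma scaleR_mat_vec: "((c::real) *\<^sub>R (M::real^'n^'m)) *v x = c *\<^sub>R (M *v x)"
  by (simp add: vec_eq_iff matrix_vector_mult_def sum_distrib_left mult.assoc)

lemma max_lip:
  fixes F G :: "'b \<Rightarrow> real"
  assumes "finite A" "A \<noteq> {}" "\<And>a. a \<in> A \<Longrightarrow> \<bar>F a - G a\<bar> \<le> e"
  shows "\<bar>Max (F ` A) - Max (G ` A)\<bar> \<le> e"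
proof -
  have "Max (F ` A) \<in> F ` A" using assms(1,2) by (intro Max_in) auto
  then obtain a1 where a1: "a1 \<in> A" "Max (F ` A) = F a1" by auto
  have "Max (G ` A) \<in> G ` A" using assms(1,2) by (intro Max_in) auto
  then obtain a2 where a2: "a2 \<in> A" "Max (G ` A) = G a2" by auto
  have "G a1 \<le> Max (G ` A)" using a1 assms by auto
  moreover have "F a2 \<le> Max (F ` A)" using a2 assms by auto
  ultimately show ?thesis using assms(3)[OF a1(1)] assms(3)[OF a2(1)] a1 a2 by linarith
qed

lemma max_lip2: "\<bar>a - c\<bar> \<le> e \<Longrightarrow> \<bar>b - d\<bar> \<le> e \<Longrightarrow> \<bar>max a b - max c d\<bar> \<le> (e::real)"
  by (auto simp: max_def abs_le_iff)

lemma min_lip2: "\<bar>a - c\<bar> \<le> e \<Longrightarrow> \<bar>b - d\<bar> \<le> e \<Longrightarrow> \<bar>min a b - min c d\<bar> \<le> (e::real)"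
  by (auto simp: min_def abs_le_iff)

lemma clip_lip:
  assumes "\<bar>x1 - y1\<bar> \<le> e" "\<bar>x2 - y2\<bar> \<le> e" "\<bar>x3 - y3\<bar> \<le> e" "\<bar>x4 - y4\<bar> \<le> e" "\<bar>x5 - y5\<bar> \<le> e"
  shows "\<bar>clip x1 (max x2 x3) (min x4 x5) - clip y1 (max y2 y3) (min y4 y5)\<bar> \<le> (e::real)"
  unfolding clip_def by (intro min_lip2 max_lip2 assms)



lemma Q_cover:
  fixes A :: "'b set" and \<phi> :: "'s \<Rightarrow> 'b \<Rightarrow> real^'d" and L B D M lam eps :: real
  assumes phi: "\<And>s a. a \<in> A \<Longrightarrow> norm (\<phi> s a) \<le> 1"
    and pos: "L > 0" "B > 0" "D > 0" "lam > 0" "eps > 0"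
  shows "\<exists>CQ::('s \<Rightarrow> 'b \<Rightarrow> real) set. finite CQ \<and>
     real (card CQ) \<le> (1 + 8 * L / eps) ^ CARD('d) * (1 + 8 * D / eps)
        * (1 + 8 * sqrt (real CARD('d)) * B^2 / (lam * eps^2)) ^ (CARD('d)^2) \<and>
     (\<forall>Q\<in>Qclass \<phi> L B D M lam. \<exists>g\<in>CQ. \<forall>s. \<forall>a\<in>A. \<bar>Q s a - g s a\<bar> \<le> eps)"
proof -
  obtain Cw :: "(real^'d) set" where Cw: "finite Cw" "real (card Cw) \<le> (1 + 2 * L / (eps/4)) ^ DIM(real^'d)"
      "\<forall>x\<in>cball 0 L. \<exists>c\<in>Cw. dist x c \<le> eps/4"
    using net_exists[where 'a="real^'d", of L "eps/4"] pos by auto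
  obtain Cv :: "real set" where Cv: "finite Cv" "real (card Cv) \<le> (1 + 2 * D / (eps/4)) ^ DIM(real)"
      "\<forall>x\<in>cball 0 D. \<exists>c\<in>Cv. dist x c \<le> eps/4"
    using net_exists[where 'a=real, of D "eps/4"] pos by auto
  define RA where "RA = sqrt (real CARD('d)) * B^2 / lam"
  have RA0: "RA \<ge> 0" using pos by (simp add: RA_def)
  obtain CA :: "(real^'d^'d) set" where CA: "finite CA"
      "real (card CA) \<le> (1 + 2 * RA / (eps^2/4)) ^ DIM(real^'d^'d)"
      "\<forall>x\<in>cball 0 RA. \<exists>c\<in>CA. dist x c \<le> eps^2/4"
    using net_exists[where 'a="real^'d^'d", of RA "eps^2/4"] pos RA0 by auto
  define G where "G = (\<lambda>(w::real^'d, v::real, A'::real^'d^'d).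
      (\<lambda>s a. min (w \<bullet> \<phi> s a + v + sqrt (max 0 (\<phi> s a \<bullet> (A' *v \<phi> s a)))) M))"
  define CQ where "CQ = G ` (Cw \<times> Cv \<times> CA)"
  have fin: "finite CQ" using Cw Cv CA by (simp add: CQ_def)
  have "card CQ \<le> card (Cw \<times> Cv \<times> CA)" unfolding CQ_def by (rule card_image_le) (simp add: Cw Cv CA)
  also have "\<dots> = card Cw * card Cv * card CA" by (simp add: card_cartesian_product)
  finally have "real (card CQ) \<le> real (card Cw) * real (card Cv) * real (card CA)"
    by (metis of_nat_le_iff of_nat_mult)
  also have "\<dots> \<le> (1 + 8 * L / eps) ^ CARD('d) * (1 + 8 * D / eps)
        * (1 + 8 * sqrt (real CARD('d)) * B^2 / (lam * eps^2)) ^ (CARD('d)^2)"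
  proof -
    have e1: "(1 + 2 * L / (eps/4)) = 1 + 8 * L / eps" by simp
    have e2: "(1 + 2 * D / (eps/4)) = 1 + 8 * D / eps" by simp
    have e3: "(1 + 2 * RA / (eps^2/4)) = 1 + 8 * sqrt (real CARD('d)) * B^2 / (lam * eps^2)"
      by (simp add: RA_def field_simps)
    have c1: "real (card Cw) \<le> (1 + 8 * L / eps) ^ CARD('d)" using Cw(2) e1 by simp
    have c2: "real (card Cv) \<le> 1 + 8 * D / eps" using Cv(2) e2 by simp
    have c3: "real (card CA) \<le> (1 + 8 * sqrt (real CARD('d)) * B^2 / (lam * eps^2)) ^ (CARD('d)^2)"
      using CA(2) e3 by (simp add: power2_eq_square)
    show ?thesis using c1 c2 c3 by (intro mult_mono) auto
  qed
  finally have cardb: "real (card CQ) \<le> (1 + 8 * L / eps) ^ CARD('d) * (1 + 8 * D / eps)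
        * (1 + 8 * sqrt (real CARD('d)) * B^2 / (lam * eps^2)) ^ (CARD('d)^2)" .
  have cov: "\<exists>g\<in>CQ. \<forall>s. \<forall>a\<in>A. \<bar>Q s a - g s a\<bar> \<le> eps" if Q: "Q \<in> Qclass \<phi> L B D M lam" for Q
  proof -
    obtain w v \<beta> Lam where Qdef: "Q = (\<lambda>s a. min (w \<bullet> \<phi> s a + v + \<beta> * sqrt (\<phi> s a \<bullet> (matrix_inv Lam *v \<phi> s a))) M)"
      and hw: "norm w \<le> L" and hb: "0 \<le> \<beta>" "\<beta> \<le> B" and hv: "0 \<le> v" "v \<le> D"
      and pd: "pos_def_mat Lam" and me: "min_eig_ge Lam lam"
      using Q unfolding Qclass_def by blast
    define A0 where "A0 = (\<beta>^2) *\<^sub>R matrix_inv Lam"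
    have "norm A0 = \<beta>^2 * norm (matrix_inv Lam)" by (simp add: A0_def)
    also have "\<dots> \<le> B^2 * (sqrt (real CARD('d)) / lam)"
      using inv_props(4)[OF pd me pos(4)] hb by (intro mult_mono power_mono) auto
    finally have nA0: "A0 \<in> cball 0 RA" by (simp add: RA_def algebra_simps)
    obtain w' where w': "w' \<in> Cw" "dist w w' \<le> eps/4" using Cw(3) hw mem_cball_0 by blast
    have vc: "v \<in> cball (0::real) D" using hv by auto
    obtain v' where v': "v' \<in> Cv" "dist v v' \<le> eps/4" using Cv(3) vc by blast
    obtain A' where A': "A' \<in> CA" "dist A0 A' \<le> eps^2/4" using CA(3) nA0 by blast
    have gin: "G (w', v', A') \<in> CQ" unfolding CQ_def using w' v' A' by blast
    show ?thesis
    proof (intro bexI[OF _ gin] allI ballI)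
      fix s a assume a: "a \<in> A"
      define x where "x = \<phi> s a"
      have nx: "norm x \<le> 1" using phi[OF a] by (simp add: x_def)
      have t1: "\<bar>w \<bullet> x - w' \<bullet> x\<bar> \<le> eps/4"
      proof -
        have "\<bar>w \<bullet> x - w' \<bullet> x\<bar> = \<bar>(w - w') \<bullet> x\<bar>" by (simp add: inner_diff_left)
        also have "\<dots> \<le> norm (w - w') * norm x" by (rule Cauchy_Schwarz_ineq2)
        also have "\<dots> \<le> (eps/4) * 1" using w' nx pos(5) by (intro mult_mono) (auto simp: dist_norm)
        finally show ?thesis by simp
      qed
      have t2: "\<bar>v - v'\<bar> \<le> eps/4" using v' by (simp add: dist_real_def)
      have sq: "\<beta> * sqrt (x \<bullet> (matrix_inv Lam *v x)) = sqrt (x \<bullet> (A0 *v x))"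
        using hb by (simp add: A0_def scaleR_mat_vec real_sqrt_mult)
      have nn: "0 \<le> x \<bullet> (A0 *v x)"
        using inv_props(3)[OF pd me pos(4), of x] hb by (simp add: A0_def scaleR_mat_vec)
      have "\<bar>x \<bullet> (A0 *v x) - x \<bullet> (A' *v x)\<bar> = \<bar>x \<bullet> ((A0 - A') *v x)\<bar>"
        by (simp add: matrix_vector_mult_diff_rdistrib inner_diff_right)
      also have "\<dots> \<le> norm x * norm ((A0 - A') *v x)" by (rule Cauchy_Schwarz_ineq2)
      also have "\<dots> \<le> 1 * (norm (A0 - A') * norm x)"
        using nx norm_mat_vec[of "A0 - A'" x] by (intro mult_mono) auto
      also have "\<dots> \<le> 1 * ((eps^2/4) * 1)"
        using A' nx pos(5) by (intro mult_mono) (auto simp: dist_norm)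
      finally have "\<bar>x \<bullet> (A0 *v x) - x \<bullet> (A' *v x)\<bar> \<le> eps^2/4" by simp
      hence "sqrt \<bar>x \<bullet> (A0 *v x) - x \<bullet> (A' *v x)\<bar> \<le> sqrt (eps^2/4)" by (rule real_sqrt_le_mono)
      also have "sqrt (eps^2/4) = eps/2" using pos by (simp add: real_sqrt_divide)
      finally have t3: "\<bar>sqrt (x \<bullet> (A0 *v x)) - sqrt (max 0 (x \<bullet> (A' *v x)))\<bar> \<le> eps/2"
        using sqrt_hoelder[OF nn, of "x \<bullet> (A' *v x)"] by linarith
      have "\<bar>(w \<bullet> x + v + sqrt (x \<bullet> (A0 *v x))) - (w' \<bullet> x + v' + sqrt (max 0 (x \<bullet> (A' *v x))))\<bar> \<le> eps"
        using t1 t2 t3 by linarith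
      hence "\<bar>min (w \<bullet> x + v + sqrt (x \<bullet> (A0 *v x))) M - min (w' \<bullet> x + v' + sqrt (max 0 (x \<bullet> (A' *v x)))) M\<bar> \<le> eps"
        using pos(5) by (intro min_lip2) auto
      moreover have "Q s a = min (w \<bullet> x + v + sqrt (x \<bullet> (A0 *v x))) M"
        unfolding Qdef x_def[symmetric] sq[symmetric] by (simp only:)
      moreover have "G (w', v', A') s a = min (w' \<bullet> x + v' + sqrt (max 0 (x \<bullet> (A' *v x)))) M"
        unfolding G_def x_def by simp
      ultimately show "\<bar>Q s a - G (w', v', A') s a\<bar> \<le> eps" by simp
    qed
  qed
  show ?thesis by (intro exI[of _ CQ] conjI fin cardb ballI cov)
qed



lemma ln_aux:
  fixes x y z :: real
  assumes "x > 0" "y > 0" "z > 0"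
  shows "ln ((x ^ n * y * z ^ m) ^ 5) = 5 * real n * ln x + 5 * ln y + 5 * real m * ln z"
  using assms by (simp add: ln_mult ln_realpow algebra_simps)

theorem lemma18:
  fixes A :: "'b set" and \<phi> :: "'s \<Rightarrow> 'b \<Rightarrow> real^'d"
    and L B D M lam eps :: real
  assumes "finite A" and "A \<noteq> {}"
    and "\<And>s a. a \<in> A \<Longrightarrow> norm (\<phi> s a) \<le> 1"
    and "L > 0" "B > 0" "D > 0" "M > 0" "lam > 0"
    and "eps > 0"
  shows "covering_number eps (Vclass A \<phi> L B D M lam) \<noteq> \<infinity> \<and>
    ln (real (the_enat (covering_number eps (Vclass A \<phi> L B D M lam))))
      \<le> 5 * real CARD('d) * ln (1 + 8 * L / eps) + 5 * ln (1 + 8 * D / eps)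
         + 5 * (real CARD('d))^2 * ln (1 + 8 * sqrt (real CARD('d)) * B^2 / (lam * eps^2))"
proof -
  define K where "K = (1 + 8 * L / eps) ^ CARD('d) * (1 + 8 * D / eps)
        * (1 + 8 * sqrt (real CARD('d)) * B^2 / (lam * eps^2)) ^ (CARD('d)^2)"
  obtain CQ :: "('s \<Rightarrow> 'b \<Rightarrow> real) set" where CQf: "finite CQ" and CQc: "real (card CQ) \<le> K"
    and CQv: "\<And>Q. Q \<in> Qclass \<phi> L B D M lam \<Longrightarrow> \<exists>g\<in>CQ. \<forall>s. \<forall>a\<in>A. \<bar>Q s a - g s a\<bar> \<le> eps"
    using Q_cover[of A \<phi> L B D lam eps M] assms unfolding K_def by blast
  define H where "H = (\<lambda>(g1::'s \<Rightarrow> 'b \<Rightarrow> real, g2::'s \<Rightarrow> 'b \<Rightarrow> real, g3::'s \<Rightarrow> 'b \<Rightarrow> real,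
      g4::'s \<Rightarrow> 'b \<Rightarrow> real, g5::'s \<Rightarrow> 'b \<Rightarrow> real).
      (\<lambda>s. Max ((\<lambda>a. clip (g1 s a) (max (g2 s a) (g3 s a)) (min (g4 s a) (g5 s a))) ` A)))"
  define C where "C = H ` (CQ \<times> CQ \<times> CQ \<times> CQ \<times> CQ)"
  have Cf: "finite C" using CQf by (simp add: C_def)
  have "card C \<le> card (CQ \<times> CQ \<times> CQ \<times> CQ \<times> CQ)" unfolding C_def
    by (rule card_image_le) (simp add: CQf)
  also have "\<dots> = card CQ ^ 5" by (simp add: card_cartesian_product eval_nat_numeral)
  finally have "real (card C) \<le> real (card CQ) ^ 5" by (metis of_nat_le_iff of_nat_power)
  also have "\<dots> \<le> K ^ 5" using CQc by (intro power_mono) auto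
  finally have Cc: "real (card C) \<le> K ^ 5" .
  have Ccov: "\<forall>f\<in>Vclass A \<phi> L B D M lam. \<exists>g\<in>C. (SUP x. \<bar>f x - g x\<bar>) \<le> eps \<and> bdd_above (range (\<lambda>x. \<bar>f x - g x\<bar>))"
  proof
    fix f assume "f \<in> Vclass A \<phi> L B D M lam"
    then obtain Q1 Q2 Q3 Q4 Q5 where fdef: "f = (\<lambda>s. Max ((\<lambda>a. clip (Q1 s a) (max (Q2 s a) (Q3 s a)) (min (Q4 s a) (Q5 s a))) ` A))"
      and Q: "Q1 \<in> Qclass \<phi> L B D M lam" "Q2 \<in> Qclass \<phi> L B D M lam" "Q3 \<in> Qclass \<phi> L B D M lam"
        "Q4 \<in> Qclass \<phi> L B D M lam" "Q5 \<in> Qclass \<phi> L B D M lam"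
      unfolding Vclass_def by blast
    obtain g1 where g1: "g1 \<in> CQ" "\<forall>s. \<forall>a\<in>A. \<bar>Q1 s a - g1 s a\<bar> \<le> eps" using CQv[OF Q(1)] by blast
    obtain g2 where g2: "g2 \<in> CQ" "\<forall>s. \<forall>a\<in>A. \<bar>Q2 s a - g2 s a\<bar> \<le> eps" using CQv[OF Q(2)] by blast
    obtain g3 where g3: "g3 \<in> CQ" "\<forall>s. \<forall>a\<in>A. \<bar>Q3 s a - g3 s a\<bar> \<le> eps" using CQv[OF Q(3)] by blast
    obtain g4 where g4: "g4 \<in> CQ" "\<forall>s. \<forall>a\<in>A. \<bar>Q4 s a - g4 s a\<bar> \<le> eps" using CQv[OF Q(4)] by blast
    obtain g5 where g5: "g5 \<in> CQ" "\<forall>s. \<forall>a\<in>A. \<bar>Q5 s a - g5 s a\<bar> \<le> eps" using CQv[OF Q(5)] by blast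
    define g where "g = H (g1, g2, g3, g4, g5)"
    have gC: "g \<in> C" unfolding g_def C_def using g1 g2 g3 g4 g5 by blast
    have pt: "\<bar>f s - g s\<bar> \<le> eps" for s
      unfolding fdef g_def H_def prod.case
      by (intro max_lip assms(1,2) clip_lip) (use g1 g2 g3 g4 g5 in auto)
    show "\<exists>g\<in>C. (SUP x. \<bar>f x - g x\<bar>) \<le> eps \<and> bdd_above (range (\<lambda>x. \<bar>f x - g x\<bar>))"
    proof (intro bexI[OF _ gC] conjI)
      show "(SUP x. \<bar>f x - g x\<bar>) \<le> eps" by (intro cSUP_least pt) simp
      show "bdd_above (range (\<lambda>x. \<bar>f x - g x\<bar>))" using pt by (intro bdd_aboveI2[where M=eps]) auto
    qed
  qed
  have le: "covering_number eps (Vclass A \<phi> L B D M lam) \<le> enat (card C)"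
    unfolding covering_number_def by (rule Inf_lower) (use Cf Ccov in blast)
  then obtain n where n: "covering_number eps (Vclass A \<phi> L B D M lam) = enat n" and nC: "n \<le> card C"
    by (cases "covering_number eps (Vclass A \<phi> L B D M lam)") auto
  have a1: "1 \<le> 1 + 8 * L / eps" and a2: "1 \<le> 1 + 8 * D / eps"
    and a3: "1 \<le> 1 + 8 * sqrt (real CARD('d)) * B^2 / (lam * eps^2)"
    using assms by (simp_all add: zero_le_divide_iff)
  have p1: "1 \<le> (1 + 8 * L / eps) ^ CARD('d)" by (rule one_le_power[OF a1])
  have p3: "1 \<le> (1 + 8 * sqrt (real CARD('d)) * B^2 / (lam * eps^2)) ^ (CARD('d)^2)" by (rule one_le_power[OF a3])
  have "1 * 1 * 1 \<le> K" unfolding K_def using p1 a2 p3 by (intro mult_mono) auto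
  hence K1: "K \<ge> 1" by simp
  define RHS where "RHS = 5 * real CARD('d) * ln (1 + 8 * L / eps) + 5 * ln (1 + 8 * D / eps)
         + 5 * (real CARD('d))^2 * ln (1 + 8 * sqrt (real CARD('d)) * B^2 / (lam * eps^2))"
  have lnK: "ln (K ^ 5) = RHS" unfolding K_def RHS_def
    using ln_aux[of "1 + 8 * L / eps" "1 + 8 * D / eps" "1 + 8 * sqrt (real CARD('d)) * B^2 / (lam * eps^2)"
        "CARD('d)" "CARD('d)^2"] a1 a2 a3 by simp
  have "ln (real n) \<le> RHS"
  proof (cases "n = 0")
    case True
    have "0 \<le> RHS" unfolding RHS_def using a1 a2 a3 by (intro add_nonneg_nonneg mult_nonneg_nonneg) auto
    thus ?thesis using True by simp
  next
    case False
    have "ln (real n) \<le> ln (K ^ 5)"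
      using False nC Cc K1 by (subst ln_le_cancel_iff) auto
    thus ?thesis using lnK by simp
  qed
  thus ?thesis using n unfolding RHS_def by simp
qed

end
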